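(* Let $(E,\tau)$ be a uniquely generated violator space. Then each equivalence class of the relation $X\sim Y\iff\tau(X)=\tau(Y)$ on $2^E$ is closed under intersection and under union: if $\tau(X)=\tau(Y)$ then $\tau(X\cap Y)=\tau(X\cup Y)=\tau(X)$.
   Context: $E$ is a finite set and $\tau:2^E\to 2^E$. $(E,\tau)$ is a violator space if (C1) $Z\subseteq\tau(Z)$ for all $Z\subseteq E$, and (C22) for all $F,G\subseteq E$, $F\subseteq G\subseteq\tau(F)$ implies $\tau(G)=\tau(F)$. For $X\subseteq E$, a generator of $X$ is any $B\subseteq E$ with $\tau(B)=\tau(X)$; a basis of $X$ is an inclusion-minimal generator of $X$. The space is uniquely generated if every $X\subseteq E$ has exactly one basis. *)

theory Defs
  imports Main
begin

text \<open>A violator space (E, tau): E finite, tau maps subsets of E to subsets of E,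
  (C1) extensivity and (C22) the consistency/locality axiom.\<close>
definition violator_space :: "'a set \<Rightarrow> ('a set \<Rightarrow> 'a set) \<Rightarrow> bool" where
  "violator_space E tau \<longleftrightarrow> finite E
     \<and> (\<forall>Z. Z \<subseteq> E \<longrightarrow> tau Z \<subseteq> E)
     \<and> (\<forall>Z. Z \<subseteq> E \<longrightarrow> Z \<subseteq> tau Z)
     \<and> (\<forall>F G. F \<subseteq> E \<longrightarrow> G \<subseteq> E \<longrightarrow> F \<subseteq> G \<longrightarrow> G \<subseteq> tau F \<longrightarrow> tau G = tau F)"

definition generator :: "'a set \<Rightarrow> ('a set \<Rightarrow> 'a set) \<Rightarrow> 'a set \<Rightarrow> 'a set \<Rightarrow> bool" where
  "generator E tau X B \<longleftrightarrow> B \<subseteq> E \<and> tau B = tau X"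

definition basis :: "'a set \<Rightarrow> ('a set \<Rightarrow> 'a set) \<Rightarrow> 'a set \<Rightarrow> 'a set \<Rightarrow> bool" where
  "basis E tau X B \<longleftrightarrow> generator E tau X B \<and> (\<forall>B'. B' \<subset> B \<longrightarrow> \<not> generator E tau X B')"

definition uniquely_generated :: "'a set \<Rightarrow> ('a set \<Rightarrow> 'a set) \<Rightarrow> bool" where
  "uniquely_generated E tau \<longleftrightarrow> (\<forall>X. X \<subseteq> E \<longrightarrow> (\<exists>!B. basis E tau X B))"

end

theory Submission
  imports Defs
begin

lemma basis_exists:
  "finite S \<Longrightarrow> generator E tau X S \<Longrightarrow> \<exists>B\<subseteq>S. basis E tau X B"
proof (induction S rule: finite_psubset_induct)
  case (psubset S)
  show ?case
  proof (cases "basis E tau X S")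
    case True then show ?thesis by blast
  next
    case False
    then obtain B' where "B' \<subset> S" "generator E tau X B'"
      using psubset.prems unfolding basis_def by blast
    then obtain B where "B \<subseteq> B'" "basis E tau X B" using psubset.IH by blast
    then show ?thesis using \<open>B' \<subset> S\<close> by blast
  qed
qed

theorem mainTheorem17:
  fixes E :: "'a set" and tau :: "'a set \<Rightarrow> 'a set"
  assumes "violator_space E tau" and "uniquely_generated E tau"
    and "X \<subseteq> E" and "Y \<subseteq> E" and "tau X = tau Y"
  shows "tau (X \<inter> Y) = tau X \<and> tau (X \<union> Y) = tau X"
proof
  note vs = assms(1)[unfolded violator_space_def]
  have fin: "finite E" using vs by (rule conjunct1)
  have ext: "\<And>Z. Z \<subseteq> E \<Longrightarrow> Z \<subseteq> tau Z"
    using vs[THEN conjunct2, THEN conjunct2, THEN conjunct1] by blast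
  have c22: "\<And>F G. F \<subseteq> E \<Longrightarrow> G \<subseteq> E \<Longrightarrow> F \<subseteq> G \<Longrightarrow> G \<subseteq> tau F \<Longrightarrow> tau G = tau F"
    using vs[THEN conjunct2, THEN conjunct2, THEN conjunct2] by blast
  have gX: "generator E tau X X" using assms(3) by (simp add: generator_def)
  have gY: "generator E tau X Y" using assms(4,5) by (simp add: generator_def)
  obtain B1 where B1: "B1 \<subseteq> X" "basis E tau X B1"
    using basis_exists[OF finite_subset[OF assms(3) fin] gX] by blast
  obtain B2 where B2: "B2 \<subseteq> Y" "basis E tau X B2"
    using basis_exists[OF finite_subset[OF assms(4) fin] gY] by blast
  have "\<exists>!B. basis E tau X B" using assms(2,3) unfolding uniquely_generated_def by simp
  hence "B1 = B2" using B1(2) B2(2) by auto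
  hence sub: "B1 \<subseteq> X \<inter> Y" using B1 B2 by blast
  have tB: "tau B1 = tau X" using B1(2) by (simp add: basis_def generator_def)
  have "X \<inter> Y \<subseteq> tau B1" using ext[OF assms(3)] tB by blast
  moreover have "B1 \<subseteq> E" using sub assms(3) by blast
  ultimately have "tau (X \<inter> Y) = tau B1" using c22[of B1 "X \<inter> Y"] sub assms(3) by auto
  thus "tau (X \<inter> Y) = tau X" using tB by simp
  have "X \<union> Y \<subseteq> tau X" using ext[OF assms(3)] ext[OF assms(4)] assms(5) by blast
  thus "tau (X \<union> Y) = tau X" using c22[of X "X \<union> Y"] assms(3,4) by auto
qed

end
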